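(* Let $N_1,N_2$ be free abelian groups of rank $n$ and $\Sigma_1\subset(N_1)_{\mathbf R}$, $\Sigma_2\subset(N_2)_{\mathbf R}$ amply equivalent complete fans with bijection $\Psi:\Sigma_1(1)\to\Sigma_2(1)$ preserving primitive collections and relations among ray generators. Then there is a $\mathbf Q$-linear isomorphism $\Phi:(N_1)_{\mathbf Q}\to(N_2)_{\mathbf Q}$ such that (1) $\Phi(u_\rho)=u_{\Psi(\rho)}$ for all $\rho\in\Sigma_1(1)$; (2) if $\Phi_{\mathbf R}$ is its $\mathbf R$-linear extension, a cone $\sigma_1\subset(N_1)_{\mathbf R}$ is a cone of $\Sigma_1$ if and only if $\Phi_{\mathbf R}(\sigma_1)$ is a cone of $\Sigma_2$. Moreover, (3) $\Phi$ induces an isomorphism $\Gamma(G_1)_{\mathbf Q}\cong\Gamma(G_2)_{\mathbf Q}$, namely the unique map $\varphi$ making the diagram with exact rows $0\to\Gamma(G_i)_{\mathbf Q}\to\mathbf Q^{\Sigma(1)}\to(N_i)_{\mathbf Q}\to0$ ($i=1,2$), identity in the middle and $\Phi$ on the right, commute.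
   Context: For a fan $\Sigma$: rays $\Sigma(1)$, primitive generators $u_\rho$. A primitive collection is $C\subset\Sigma(1)$ not contained in $\sigma(1)$ for any cone $\sigma$ while every proper subset is. Complete fans $\Sigma_1\subset(N_1)_{\mathbf R},\Sigma_2\subset(N_2)_{\mathbf R}$ (equal ranks) are amply equivalent via a bijection $\Psi:\Sigma_1(1)\to\Sigma_2(1)$ if $C$ is a primitive collection of $\Sigma_1$ iff $\Psi(C)$ is one of $\Sigma_2$, and for all integers $(a_\rho)_{\rho\in\Sigma_1(1)}$, $\sum a_\rho u_\rho=0\iff\sum a_\rho u_{\Psi(\rho)}=0$. $G_i=\mathrm{Hom}(\mathrm{Cl}(X_{\Sigma_i}),\mathbf C^\times)$, and $\Gamma(G_i)=\{b\in\mathbf Z^{\Sigma_i(1)}:\sum b_\rho u_\rho=0\}$ is its group of one-parameter subgroups. $\mathbf Q^{\Sigma(1)}$ denotes $\mathbf Q^{\Sigma_1(1)}$ identified with $\mathbf Q^{\Sigma_2(1)}$ via $\Psi$, with maps $e_\rho\mapsto u_\rho$ onto $(N_1)_{\mathbf Q}$ and $e_\rho\mapsto u_{\Psi(\rho)}$ onto $(N_2)_{\mathbf Q}$. *)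

theory Defs
  imports "HOL-Analysis.Analysis"
begin

text \<open>The lattice N = Z^n inside N_R = R^n (n = CARD('n)); N_Q = Q^n.\<close>

definition lattice :: "(real^'n) set" where
  "lattice = {x. \<forall>i. x $ i \<in> \<int>}"

definition rat_vecs :: "(real^'n) set" where
  "rat_vecs = {x. \<forall>i. x $ i \<in> \<rat>}"

definition rat_poly_cone :: "(real^'n) set \<Rightarrow> bool" where
  "rat_poly_cone \<sigma> \<longleftrightarrow> (\<exists>S. finite S \<and> S \<subseteq> lattice \<and>
      \<sigma> = {\<Sum>v\<in>S. c v *\<^sub>R v | c. \<forall>v\<in>S. c v \<ge> 0})"

definition sc_rat_cone :: "(real^'n) set \<Rightarrow> bool" where
  "sc_rat_cone \<sigma> \<longleftrightarrow> rat_poly_cone \<sigma> \<and> \<sigma> \<inter> uminus ` \<sigma> = {0}"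

definition fan :: "(real^'n) set set \<Rightarrow> bool" where
  "fan \<Sigma> \<longleftrightarrow> finite \<Sigma> \<and> (\<forall>\<sigma>\<in>\<Sigma>. sc_rat_cone \<sigma>)
     \<and> (\<forall>\<sigma>\<in>\<Sigma>. \<forall>\<tau>. \<tau> face_of \<sigma> \<and> \<tau> \<noteq> {} \<longrightarrow> \<tau> \<in> \<Sigma>)
     \<and> (\<forall>\<sigma>\<in>\<Sigma>. \<forall>\<tau>\<in>\<Sigma>. (\<sigma> \<inter> \<tau>) face_of \<sigma> \<and> (\<sigma> \<inter> \<tau>) face_of \<tau>)"

definition complete_fan :: "(real^'n) set set \<Rightarrow> bool" where
  "complete_fan \<Sigma> \<longleftrightarrow> fan \<Sigma> \<and> \<Union>\<Sigma> = UNIV"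

definition rays :: "(real^'n) set set \<Rightarrow> (real^'n) set set" where
  "rays \<Sigma> = {\<rho>\<in>\<Sigma>. dim \<rho> = 1}"

definition prim_gen :: "(real^'n) set \<Rightarrow> real^'n" where
  "prim_gen \<rho> = (THE u. u \<in> \<rho> \<inter> lattice \<and> u \<noteq> 0 \<and>
                     (\<forall>w\<in>\<rho> \<inter> lattice. \<exists>k::int. w = of_int k *\<^sub>R u))"

definition cone_rays :: "(real^'n) set set \<Rightarrow> (real^'n) set \<Rightarrow> (real^'n) set set" where
  "cone_rays \<Sigma> \<sigma> = {\<rho>\<in>rays \<Sigma>. \<rho> face_of \<sigma>}"

definition primitive_collection :: "(real^'n) set set \<Rightarrow> (real^'n) set set \<Rightarrow> bool" where
  "primitive_collection \<Sigma> C \<longleftrightarrow> C \<subseteq> rays \<Sigma>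
     \<and> (\<forall>\<sigma>\<in>\<Sigma>. \<not> C \<subseteq> cone_rays \<Sigma> \<sigma>)
     \<and> (\<forall>D. D \<subset> C \<longrightarrow> (\<exists>\<sigma>\<in>\<Sigma>. D \<subseteq> cone_rays \<Sigma> \<sigma>))"

definition amply_equivalent ::
  "(real^'n) set set \<Rightarrow> (real^'n) set set \<Rightarrow> ((real^'n) set \<Rightarrow> (real^'n) set) \<Rightarrow> bool" where
  "amply_equivalent \<Sigma>1 \<Sigma>2 \<Psi> \<longleftrightarrow> complete_fan \<Sigma>1 \<and> complete_fan \<Sigma>2
     \<and> bij_betw \<Psi> (rays \<Sigma>1) (rays \<Sigma>2)
     \<and> (\<forall>C. C \<subseteq> rays \<Sigma>1 \<longrightarrow> (primitive_collection \<Sigma>1 C \<longleftrightarrow> primitive_collection \<Sigma>2 (\<Psi> ` C)))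
     \<and> (\<forall>a :: (real^'n) set \<Rightarrow> int.
          (\<Sum>\<rho>\<in>rays \<Sigma>1. of_int (a \<rho>) *\<^sub>R prim_gen \<rho>) = 0 \<longleftrightarrow>
          (\<Sum>\<rho>\<in>rays \<Sigma>1. of_int (a \<rho>) *\<^sub>R prim_gen (\<Psi> \<rho>)) = 0)"

end

theory Submission
  imports Defs
begin

definition cg :: "(real^'n) set \<Rightarrow> (real^'n) set" where
  "cg S = {\<Sum>v\<in>S. c v *\<^sub>R v | c. \<forall>v\<in>S. c v \<ge> 0}"

lemma cgI: "(\<And>v. v \<in> S \<Longrightarrow> c v \<ge> 0) \<Longrightarrow> x = (\<Sum>v\<in>S. c v *\<^sub>R v) \<Longrightarrow> x \<in> cg S"
  unfolding cg_def by blast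

lemma cgE: assumes "x \<in> cg S"
  obtains c where "\<And>v. v \<in> S \<Longrightarrow> c v \<ge> 0" "x = (\<Sum>v\<in>S. c v *\<^sub>R v)"
proof -
  from assms obtain c where "x = (\<Sum>v\<in>S. c v *\<^sub>R v)" "\<forall>v\<in>S. c v \<ge> 0" unfolding cg_def by blast
  then show thesis using that by blast
qed

lemma cg_zero: "0 \<in> cg S"
  by (rule cgI[where c="\<lambda>_. 0"]) auto

lemma cg_add: assumes "x \<in> cg S" "y \<in> cg S" "a \<ge> 0" "b \<ge> 0"
  shows "a *\<^sub>R x + b *\<^sub>R y \<in> cg S"
proof -
  obtain c where c: "\<And>v. v \<in> S \<Longrightarrow> c v \<ge> 0" "x = (\<Sum>v\<in>S. c v *\<^sub>R v)" using cgE[OF assms(1)] by blast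
  obtain d where d: "\<And>v. v \<in> S \<Longrightarrow> d v \<ge> 0" "y = (\<Sum>v\<in>S. d v *\<^sub>R v)" using cgE[OF assms(2)] by blast
  show ?thesis
  proof (rule cgI[where c="\<lambda>v. a * c v + b * d v"])
    show "a * c v + b * d v \<ge> 0" if "v \<in> S" for v using c d that assms by simp
    show "a *\<^sub>R x + b *\<^sub>R y = (\<Sum>v\<in>S. (a * c v + b * d v) *\<^sub>R v)"
      by (simp add: c(2) d(2) scaleR_sum_right scaleR_add_left sum.distrib)
  qed
qed

lemma cg_scale: "x \<in> cg S \<Longrightarrow> a \<ge> 0 \<Longrightarrow> a *\<^sub>R x \<in> cg S"
  using cg_add[OF _ cg_zero, of x S a 0] by simp

lemma cg_plus: "x \<in> cg S \<Longrightarrow> y \<in> cg S \<Longrightarrow> x + y \<in> cg S"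
  using cg_add[of x S y 1 1] by simp

lemma cg_sum: "finite I \<Longrightarrow> (\<And>i. i \<in> I \<Longrightarrow> x i \<in> cg S) \<Longrightarrow> (\<And>i. i \<in> I \<Longrightarrow> d i \<ge> 0)
   \<Longrightarrow> (\<Sum>i\<in>I. d i *\<^sub>R x i) \<in> cg S"
  by (induction I rule: finite_induct) (auto simp: cg_zero intro!: cg_plus cg_scale)

lemma cg_base: "finite S \<Longrightarrow> v \<in> S \<Longrightarrow> v \<in> cg S"
  by (rule cgI[where c="\<lambda>w. if w = v then 1 else 0"]) (auto simp: sum.remove[of S v])

lemma cg_convex: "convex (cg S)"
  unfolding convex_def using cg_add by blast

lemma cg_mono: assumes "finite S" "T \<subseteq> S" shows "cg T \<subseteq> cg S"
proof
  fix x assume "x \<in> cg T"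
  then obtain c where c: "\<And>v. v \<in> T \<Longrightarrow> c v \<ge> 0" "x = (\<Sum>v\<in>T. c v *\<^sub>R v)" using cgE by blast
  have "finite T" using assms finite_subset by blast
  then show "x \<in> cg S" unfolding c(2) using c(1) assms by (intro cg_sum[of T "\<lambda>v. v" S c]) (auto intro!: cg_base)
qed

lemma cg_span: "cg S \<subseteq> span S"
proof
  fix x assume "x \<in> cg S"
  then obtain c where c: "x = (\<Sum>v\<in>S. c v *\<^sub>R v)" using cgE by blast
  show "x \<in> span S" unfolding c by (intro span_sum span_scale span_base)
qed


lemma cg_single: "cg {v} = {t *\<^sub>R v | t. t \<ge> 0}"
  unfolding cg_def by auto

lemma cg_sum_base: "finite S \<Longrightarrow> (\<And>w. w \<in> S \<Longrightarrow> d w \<ge> 0) \<Longrightarrow> (\<Sum>w\<in>S. d w *\<^sub>R w) \<in> cg S"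
  by (rule cgI) auto

lemma cg_pointed_zero:
  assumes S: "finite S" and pt: "cg S \<inter> uminus ` cg S = {0}"
    and d: "\<And>w. w \<in> S \<Longrightarrow> \<delta> w \<ge> 0" and z: "(\<Sum>w\<in>S. \<delta> w *\<^sub>R w) = 0" and w0: "w0 \<in> S"
  shows "\<delta> w0 *\<^sub>R w0 = 0"
proof -
  define p where "p = \<delta> w0 *\<^sub>R w0"
  define q where "q = (\<Sum>w\<in>S-{w0}. \<delta> w *\<^sub>R w)"
  have p: "p \<in> cg S" unfolding p_def using d w0 S by (intro cg_scale cg_base) auto
  have "q \<in> cg (S - {w0})" unfolding q_def using S d by (intro cg_sum_base) auto
  then have q: "q \<in> cg S" using cg_mono[OF S, of "S - {w0}"] by blast
  have "p + q = 0" unfolding p_def q_def using z S w0 by (simp add: sum.remove)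
  then have "p = - q" by (simp add: eq_neg_iff_add_eq_0)
  then have "p \<in> uminus ` cg S" using q by blast
  with p pt show ?thesis unfolding p_def[symmetric] by blast
qed

lemma cg_remove:
  assumes S: "finite S" and v: "v \<in> S" "v \<in> cg (S - {v})"
  shows "cg (S - {v}) = cg S"
proof
  show "cg (S - {v}) \<subseteq> cg S" using cg_mono[OF S] by blast
  show "cg S \<subseteq> cg (S - {v})"
  proof
    fix x assume "x \<in> cg S"
    then obtain c where c: "\<And>w. w \<in> S \<Longrightarrow> c w \<ge> 0" "x = (\<Sum>w\<in>S. c w *\<^sub>R w)" using cgE by blast
    have "x = c v *\<^sub>R v + (\<Sum>w\<in>S-{v}. c w *\<^sub>R w)" using c(2) S v by (simp add: sum.remove)
    moreover have "c v *\<^sub>R v \<in> cg (S - {v})" using v c by (intro cg_scale) auto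
    moreover have "(\<Sum>w\<in>S-{v}. c w *\<^sub>R w) \<in> cg (S - {v})" using S c by (intro cg_sum_base) auto
    ultimately show "x \<in> cg (S - {v})" using cg_plus by simp
  qed
qed

lemma cg_minimal:
  "finite S \<Longrightarrow> \<exists>S'\<subseteq>S. cg S' = cg S \<and> (\<forall>v\<in>S'. v \<notin> cg (S' - {v}))"
proof (induction "card S" arbitrary: S rule: less_induct)
  case less
  show ?case
  proof (cases "\<exists>v\<in>S. v \<in> cg (S - {v})")
    case True
    then obtain v where v: "v \<in> S" "v \<in> cg (S - {v})" by blast
    have "card (S - {v}) < card S" using less.prems v by (meson card_Diff1_less)
    then obtain S' where "S' \<subseteq> S - {v}" "cg S' = cg (S - {v})" "\<forall>v\<in>S'. v \<notin> cg (S' - {v})"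
      using less.hyps[of "S - {v}"] less.prems by auto
    then show ?thesis using cg_remove[OF less.prems v] by blast
  next
    case False
    then show ?thesis by blast
  qed
qed

lemma cg_ray_face:
  assumes S: "finite S" and pt: "cg S \<inter> uminus ` cg S = {0}"
    and ind: "\<forall>v\<in>S. v \<notin> cg (S - {v})" and v: "v \<in> S"
  shows "cg {v} face_of cg S"
  unfolding face_of_def
proof (intro conjI ballI impI)
  show "cg {v} \<subseteq> cg S" using cg_mono[OF S] v by blast
  show "convex (cg {v})" by (rule cg_convex)
  fix a b x assume a: "a \<in> cg S" and b: "b \<in> cg S" and x: "x \<in> cg {v}" and seg: "x \<in> open_segment a b"
  obtain \<alpha> where \<alpha>: "\<And>w. w \<in> S \<Longrightarrow> \<alpha> w \<ge> 0" "a = (\<Sum>w\<in>S. \<alpha> w *\<^sub>R w)" using cgE[OF a] by blast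
  obtain \<beta> where \<beta>: "\<And>w. w \<in> S \<Longrightarrow> \<beta> w \<ge> 0" "b = (\<Sum>w\<in>S. \<beta> w *\<^sub>R w)" using cgE[OF b] by blast
  obtain s where s: "s \<ge> 0" "x = s *\<^sub>R v" using x unfolding cg_single by blast
  obtain t where t: "0 < t" "t < 1" "x = (1 - t) *\<^sub>R a + t *\<^sub>R b" using seg unfolding in_segment by blast
  define \<gamma> where "\<gamma> w = (1 - t) * \<alpha> w + t * \<beta> w" for w
  have \<gamma>0: "\<gamma> w \<ge> 0" if "w \<in> S" for w unfolding \<gamma>_def using \<alpha> \<beta> t that by simp
  have xg: "x = (\<Sum>w\<in>S. \<gamma> w *\<^sub>R w)"
    unfolding t(3) \<alpha>(2) \<beta>(2) \<gamma>_def by (simp add: scaleR_sum_right scaleR_add_left sum.distrib)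
  have xg2: "x = \<gamma> v *\<^sub>R v + (\<Sum>w\<in>S-{v}. \<gamma> w *\<^sub>R w)" using xg S v by (simp add: sum.remove)
  have nz: "w \<noteq> 0" if "w \<in> S" for w using ind that cg_zero by fastforce
  have ge: "s \<le> \<gamma> v"
  proof (rule ccontr)
    assume "\<not> s \<le> \<gamma> v"
    then have pos: "s - \<gamma> v > 0" by simp
    have h: "(s - \<gamma> v) *\<^sub>R v = (\<Sum>w\<in>S-{v}. \<gamma> w *\<^sub>R w)" using xg2 s(2) by (simp add: algebra_simps)
    have eq: "v = (1 / (s - \<gamma> v)) *\<^sub>R ((s - \<gamma> v) *\<^sub>R v)" using pos by simp
    have veq: "v = (1 / (s - \<gamma> v)) *\<^sub>R (\<Sum>w\<in>S-{v}. \<gamma> w *\<^sub>R w)" using eq h by simp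
    have sin: "(\<Sum>w\<in>S-{v}. \<gamma> w *\<^sub>R w) \<in> cg (S - {v})" using S \<gamma>0 by (intro cg_sum_base) auto
    have "(1 / (s - \<gamma> v)) *\<^sub>R (\<Sum>w\<in>S-{v}. \<gamma> w *\<^sub>R w) \<in> cg (S - {v})"
      by (rule cg_scale[OF sin]) (use pos in simp)
    then have "v \<in> cg (S - {v})" using veq by simp
    then show False using ind v by blast
  qed
  define \<delta> where "\<delta> = \<gamma>(v := \<gamma> v - s)"
  have \<delta>0: "\<delta> w \<ge> 0" if "w \<in> S" for w unfolding \<delta>_def using \<gamma>0 that ge by auto
  have "(\<Sum>w\<in>S. \<delta> w *\<^sub>R w) = \<delta> v *\<^sub>R v + (\<Sum>w\<in>S-{v}. \<delta> w *\<^sub>R w)" using S v by (simp add: sum.remove)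
  also have "(\<Sum>w\<in>S-{v}. \<delta> w *\<^sub>R w) = (\<Sum>w\<in>S-{v}. \<gamma> w *\<^sub>R w)" unfolding \<delta>_def by (intro sum.cong) auto
  also have "\<delta> v *\<^sub>R v + (\<Sum>w\<in>S-{v}. \<gamma> w *\<^sub>R w) = 0" using xg2 s(2) unfolding \<delta>_def by (simp add: algebra_simps)
  finally have z: "(\<Sum>w\<in>S. \<delta> w *\<^sub>R w) = 0" .
  have g0: "\<gamma> w = 0" if "w \<in> S" "w \<noteq> v" for w
  proof -
    have "\<delta> w *\<^sub>R w = 0" using cg_pointed_zero[OF S pt \<delta>0 z that(1)] by blast
    then show ?thesis using nz[OF that(1)] that(2) unfolding \<delta>_def by simp
  qed
  have ab0: "\<alpha> w = 0 \<and> \<beta> w = 0" if "w \<in> S" "w \<noteq> v" for w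
  proof -
    have "(1 - t) * \<alpha> w + t * \<beta> w = 0" using g0[OF that] unfolding \<gamma>_def .
    moreover have "(1 - t) * \<alpha> w \<ge> 0" "t * \<beta> w \<ge> 0" using \<alpha>(1) \<beta>(1) that t by auto
    ultimately have "(1 - t) * \<alpha> w = 0" "t * \<beta> w = 0" by linarith+
    then show ?thesis using t by simp
  qed
  have "a = \<alpha> v *\<^sub>R v + (\<Sum>w\<in>S-{v}. \<alpha> w *\<^sub>R w)" using \<alpha>(2) S v by (simp add: sum.remove)
  also have "(\<Sum>w\<in>S-{v}. \<alpha> w *\<^sub>R w) = 0" using ab0 by (intro sum.neutral) auto
  finally have "a = \<alpha> v *\<^sub>R v" by simp
  then show "a \<in> cg {v}" unfolding cg_single using \<alpha>(1)[OF v] by blast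
  have "b = \<beta> v *\<^sub>R v + (\<Sum>w\<in>S-{v}. \<beta> w *\<^sub>R w)" using \<beta>(2) S v by (simp add: sum.remove)
  also have "(\<Sum>w\<in>S-{v}. \<beta> w *\<^sub>R w) = 0" using ab0 by (intro sum.neutral) auto
  finally have "b = \<beta> v *\<^sub>R v" by simp
  then show "b \<in> cg {v}" unfolding cg_single using \<beta>(1)[OF v] by blast
qed

lemma dim_cg_single: "dim (cg {v}) = (if v = (0::real^'n) then 0 else 1)"
proof -
  have "span (cg {v}) = span {v}" unfolding span_eq
    using cg_span[of "{v}"] cg_base[of "{v}" v] span_superset[of "cg {v}"] by auto
  then show ?thesis by (metis dim_span dim_singleton)
qed

lemma sc_cone_cg: assumes "sc_rat_cone \<sigma>"
  obtains S where "finite S" "S \<subseteq> lattice" "\<sigma> = cg S" "cg S \<inter> uminus ` cg S = {0}"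
  using assms unfolding sc_rat_cone_def rat_poly_cone_def cg_def by blast

lemma fan_cone_cg: assumes "fan \<Sigma>" "\<sigma> \<in> \<Sigma>"
  obtains S where "finite S" "S \<subseteq> lattice" "\<sigma> = cg S" "cg S \<inter> uminus ` cg S = {0}"
  using assms sc_cone_cg unfolding fan_def by metis

lemma lattice_diff: "x \<in> lattice \<Longrightarrow> y \<in> lattice \<Longrightarrow> x - y \<in> lattice"
  unfolding lattice_def by auto

lemma lattice_int_scale: "x \<in> lattice \<Longrightarrow> of_int k *\<^sub>R x \<in> lattice"
  unfolding lattice_def by auto

lemma ray_vec:
  fixes \<Sigma> :: "(real^'n) set set"
  assumes "fan \<Sigma>" "\<rho> \<in> rays \<Sigma>"
  obtains v where "v \<in> lattice" "v \<noteq> 0" "v \<in> \<rho>" "\<And>w. w \<in> \<rho> \<Longrightarrow> \<exists>t\<ge>0. w = t *\<^sub>R v"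
    "\<rho> \<inter> uminus ` \<rho> = {0}" "\<And>t. t \<ge> 0 \<Longrightarrow> t *\<^sub>R v \<in> \<rho>"
proof -
  have r: "\<rho> \<in> \<Sigma>" "dim \<rho> = 1" using assms(2) unfolding rays_def by auto
  obtain S where S: "finite S" "S \<subseteq> lattice" "\<rho> = cg S" "cg S \<inter> uminus ` cg S = {0}"
    using fan_cone_cg[OF assms(1) r(1)] by blast
  have "\<exists>v\<in>S. v \<noteq> 0"
  proof (rule ccontr)
    assume "\<not> (\<exists>v\<in>S. v \<noteq> 0)"
    then have "\<rho> \<subseteq> {0}" unfolding S(3) cg_def by (auto intro!: sum.neutral)
    then have "dim \<rho> \<le> dim {0::real^'n}" by (rule eucl.dim_subset)
    then show False using r(2) by simp
  qed
  then obtain v where v: "v \<in> S" "v \<noteq> 0" by blast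
  have vr: "v \<in> \<rho>" using S v cg_base by blast
  have ray: "\<exists>t\<ge>0. w = t *\<^sub>R v" if w: "w \<in> \<rho>" for w
  proof -
    have "w \<in> span {v}"
    proof (rule ccontr)
      assume nw: "w \<notin> span {v}"
      then have "w \<noteq> 0" using span_zero by auto
      then have "independent {w, v}" using nw v(2)
        by (simp add: independent_insert)
      moreover have "{w, v} \<subseteq> \<rho>" using w vr by auto
      ultimately have "card {w, v} \<le> dim \<rho>" by (rule independent_card_le_dim[rotated])
      moreover have "w \<noteq> v" using nw span_base[of v "{v}"] by auto
      then have "card {w, v} = 2" by simp
      ultimately show False using r(2) by simp
    qed
    then obtain t where t: "w = t *\<^sub>R v" by (auto simp: span_singleton)
    show ?thesis
    proof (cases "t \<ge> 0")
      case True then show ?thesis using t by blast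
    next
      case False
      have "(- t) *\<^sub>R v \<in> \<rho>" using False vr S(3) cg_scale[of v S "- t"] by simp
      then have "w \<in> uminus ` \<rho>" using t by (auto intro!: image_eqI[where x="(- t) *\<^sub>R v"])
      then have "w = 0" using w S by blast
      then show ?thesis by (intro exI[of _ 0]) simp
    qed
  qed
  have sc: "\<And>t. t \<ge> 0 \<Longrightarrow> t *\<^sub>R v \<in> \<rho>" using vr S(3) cg_scale by blast
  have pt: "\<rho> \<inter> uminus ` \<rho> = {0}" using S(3,4) by simp
  have vl: "v \<in> lattice" using S(2) v(1) by blast
  show ?thesis by (rule that[OF vl v(2) vr ray pt sc])
qed

lemma prim_gen_props:
  fixes \<Sigma> :: "(real^'n) set set"
  assumes "fan \<Sigma>" "\<rho> \<in> rays \<Sigma>"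
  shows "prim_gen \<rho> \<in> \<rho>" "prim_gen \<rho> \<in> lattice" "prim_gen \<rho> \<noteq> 0"
proof -
  obtain v where v: "v \<in> lattice" "v \<noteq> 0" "v \<in> \<rho>" "\<And>w. w \<in> \<rho> \<Longrightarrow> \<exists>t\<ge>0. w = t *\<^sub>R v"
    "\<rho> \<inter> uminus ` \<rho> = {0}" "\<And>t. t \<ge> 0 \<Longrightarrow> t *\<^sub>R v \<in> \<rho>"
    using ray_vec[OF assms] by blast
  define P where "P u \<longleftrightarrow> u \<in> \<rho> \<inter> lattice \<and> u \<noteq> 0 \<and>
                     (\<forall>w\<in>\<rho> \<inter> lattice. \<exists>k::int. w = of_int k *\<^sub>R u)" for u
  obtain i where i: "v $ i \<noteq> 0" using v(2) by (auto simp: vec_eq_iff)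
  have "v $ i \<in> \<int>" using v(1) unfolding lattice_def by blast
  then obtain z where z: "v $ i = of_int z" by (rule Ints_cases)
  define D where "D = nat \<bar>z\<bar>"
  have D0: "D > 0" using i z unfolding D_def by auto
  have Dv: "real D = \<bar>v $ i\<bar>" using z unfolding D_def by simp
  define K where "K = {k::nat. 0 < k \<and> (real k / real D) *\<^sub>R v \<in> lattice}"
  have DK: "D \<in> K" unfolding K_def using D0 v(1) by simp
  define k0 where "k0 = (LEAST k. k \<in> K)"
  have k0K: "k0 \<in> K" unfolding k0_def using DK by (rule LeastI)
  have k0le: "k0 \<le> k" if "k \<in> K" for k unfolding k0_def using that by (rule Least_le)
  define u where "u = (real k0 / real D) *\<^sub>R v"
  have Pu: "P u"
    unfolding P_def
  proof (intro conjI ballI)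
    show "u \<in> \<rho> \<inter> lattice" using k0K v(6) unfolding u_def K_def by simp
    show "u \<noteq> 0" using k0K v(2) D0 unfolding u_def K_def by simp
    fix w assume w: "w \<in> \<rho> \<inter> lattice"
    obtain t where t: "t \<ge> 0" "w = t *\<^sub>R v" using v(4) w by blast
    have "w $ i \<in> \<int>" using w unfolding lattice_def by blast
    then have "t * v $ i \<in> \<int>" using t by simp
    then have "\<bar>t * v $ i\<bar> \<in> \<int>" using Ints_abs by blast
    then have "t * real D \<in> \<int>" using Dv t(1) by (simp add: abs_mult)
    then obtain y where y: "t * real D = of_int y" by (rule Ints_cases)
    have "y \<ge> 0" using y t(1) by (metis of_int_0_le_iff zero_le_mult_iff of_nat_0_le_iff)
    define j where "j = nat y"
    have tj: "t = real j / real D" using y D0 \<open>y \<ge> 0\<close> unfolding j_def by (simp add: field_simps)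
    define q where "q = j div k0"
    define r where "r = j mod k0"
    have k0pos: "k0 > 0" using k0K unfolding K_def by simp
    have jqr: "real j = real q * real k0 + real r" unfolding q_def r_def
      by (metis of_nat_add of_nat_mult div_mult_mod_eq)
    have "w - of_int (int q) *\<^sub>R u = (real r / real D) *\<^sub>R v"
      unfolding t(2) tj u_def using D0 by (simp add: jqr algebra_simps add_divide_distrib)
    moreover have "w - of_int (int q) *\<^sub>R u \<in> lattice"
      using w \<open>u \<in> \<rho> \<inter> lattice\<close> by (intro lattice_diff lattice_int_scale) auto
    ultimately have rl: "(real r / real D) *\<^sub>R v \<in> lattice" by simp
    have "r = 0"
    proof (rule ccontr)
      assume "r \<noteq> 0"
      then have "r \<in> K" using rl unfolding K_def by simp
      then have "k0 \<le> r" by (rule k0le)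
      moreover have "r < k0" unfolding r_def using k0pos by simp
      ultimately show False by simp
    qed
    then have "w = of_int (int q) *\<^sub>R u" using \<open>w - of_int (int q) *\<^sub>R u = _\<close> by simp
    then show "\<exists>k::int. w = of_int k *\<^sub>R u" by blast
  qed
  have uniq: "u' = u" if "P u'" for u'
  proof -
    obtain k1 :: int where k1: "u' = of_int k1 *\<^sub>R u" using Pu \<open>P u'\<close> unfolding P_def by blast
    obtain k2 :: int where k2: "u = of_int k2 *\<^sub>R u'" using Pu \<open>P u'\<close> unfolding P_def by blast
    have e: "1 *\<^sub>R u = (of_int k2 * of_int k1) *\<^sub>R u" using k2 unfolding k1 by (simp only: scaleR_one scaleR_scaleR)
    have "u \<noteq> 0" using Pu unfolding P_def by blast
    then have "(of_int k2 * of_int k1 :: real) = 1" using e scaleR_cancel_right[of 1 u "of_int k2 * of_int k1"] by auto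
    then have "of_int (k2 * k1) = (1::real)" by simp
    then have "k2 * k1 = 1" by (simp only: of_int_eq_1_iff)
    then have "k1 = 1 \<or> k1 = -1" by (auto simp: zmult_eq_1_iff)
    moreover have "k1 \<noteq> -1"
    proof
      assume "k1 = -1"
      then have "u' = - u" using k1 by simp
      then have "u \<in> uminus ` \<rho>" using \<open>P u'\<close> unfolding P_def by (auto intro!: image_eqI[where x=u'])
      then have "u = 0" using v(5) Pu unfolding P_def by blast
      then show False using Pu unfolding P_def by blast
    qed
    ultimately show ?thesis using k1 by auto
  qed
  have ex1: "\<exists>!u. P u" using Pu uniq by blast
  have "P (prim_gen \<rho>)" unfolding prim_gen_def using theI'[OF ex1] unfolding P_def by blast
  then show "prim_gen \<rho> \<in> \<rho>" "prim_gen \<rho> \<in> lattice" "prim_gen \<rho> \<noteq> 0" unfolding P_def by auto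
qed

lemma fan_finite: "fan \<Sigma> \<Longrightarrow> finite \<Sigma>" unfolding fan_def by blast

lemma finite_cone_rays: "fan \<Sigma> \<Longrightarrow> finite (cone_rays \<Sigma> \<sigma>)"
  unfolding cone_rays_def rays_def using fan_finite by (metis (no_types, lifting) finite_subset mem_Collect_eq subsetI)

lemma finite_rays: "fan \<Sigma> \<Longrightarrow> finite (rays \<Sigma>)"
  unfolding rays_def using fan_finite[of \<Sigma>] by (auto intro: finite_subset[of _ \<Sigma>])

lemma cone_gen:
  fixes \<Sigma> :: "(real^'n) set set"
  assumes fan: "fan \<Sigma>" and \<sigma>: "\<sigma> \<in> \<Sigma>"
  shows "\<sigma> \<subseteq> cg (prim_gen ` cone_rays \<Sigma> \<sigma>)"
proof -
  obtain S where S: "finite S" "S \<subseteq> lattice" "\<sigma> = cg S" "cg S \<inter> uminus ` cg S = {0}"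
    using fan_cone_cg[OF fan \<sigma>] by blast
  obtain S' where S': "S' \<subseteq> S" "cg S' = cg S" "\<forall>v\<in>S'. v \<notin> cg (S' - {v})"
    using cg_minimal[OF S(1)] by blast
  have fS': "finite S'" using S' S(1) finite_subset by blast
  define U where "U = prim_gen ` cone_rays \<Sigma> \<sigma>"
  have fU: "finite U" unfolding U_def using finite_cone_rays[OF fan] by blast
  have key: "\<exists>t>0. prim_gen (cg {v}) = t *\<^sub>R v \<and> prim_gen (cg {v}) \<in> U" if v: "v \<in> S'" for v
  proof -
    have face: "cg {v} face_of \<sigma>" unfolding S(3) S'(2)[symmetric]
      using cg_ray_face[OF fS' _ S'(3) v] S(4) S'(2) by simp
    have nz: "v \<noteq> 0" using S'(3) v cg_zero by fastforce
    have inS: "cg {v} \<in> \<Sigma>" using fan face \<sigma> cg_zero[of "{v}"] unfolding fan_def by blast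
    have inR: "cg {v} \<in> rays \<Sigma>" unfolding rays_def using inS dim_cg_single[of v] nz by simp
    have inCR: "cg {v} \<in> cone_rays \<Sigma> \<sigma>" unfolding cone_rays_def using inR face by simp
    have "prim_gen (cg {v}) \<in> cg {v}" "prim_gen (cg {v}) \<noteq> 0" using prim_gen_props[OF fan inR] by auto
    then obtain t where t: "t \<ge> 0" "prim_gen (cg {v}) = t *\<^sub>R v" unfolding cg_single by blast
    have "t \<noteq> 0" using t \<open>prim_gen (cg {v}) \<noteq> 0\<close> by auto
    then have "t > 0" using t(1) by simp
    moreover have "prim_gen (cg {v}) \<in> U" using inCR unfolding U_def by blast
    ultimately show ?thesis using t(2) by blast
  qed
  then obtain t where t: "\<And>v. v \<in> S' \<Longrightarrow> t v > 0 \<and> prim_gen (cg {v}) = t v *\<^sub>R v \<and> prim_gen (cg {v}) \<in> U"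
    by metis
  show ?thesis
  proof
    fix x assume "x \<in> \<sigma>"
    then have "x \<in> cg S'" using S S' by simp
    then obtain c where c: "\<And>v. v \<in> S' \<Longrightarrow> c v \<ge> 0" "x = (\<Sum>v\<in>S'. c v *\<^sub>R v)" using cgE by blast
    have "x = (\<Sum>v\<in>S'. (c v / t v) *\<^sub>R prim_gen (cg {v}))"
      unfolding c(2)
    proof (intro sum.cong refl)
      fix v assume "v \<in> S'"
      with t[OF this] show "c v *\<^sub>R v = (c v / t v) *\<^sub>R prim_gen (cg {v})" by simp
    qed
    also have "\<dots> \<in> cg U"
    proof (rule cg_sum[OF fS'])
      fix v assume v: "v \<in> S'"
      show "prim_gen (cg {v}) \<in> cg U" using t[OF v] fU cg_base by blast
      show "0 \<le> c v / t v" using t[OF v] c(1)[OF v] by simp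
    qed
    finally show "x \<in> cg (prim_gen ` cone_rays \<Sigma> \<sigma>)" unfolding U_def .
  qed
qed

lemma span_prim_gens:
  fixes \<Sigma> :: "(real^'n) set set"
  assumes "complete_fan \<Sigma>"
  shows "span (prim_gen ` rays \<Sigma>) = UNIV"
proof -
  have fan: "fan \<Sigma>" using assms unfolding complete_fan_def by blast
  have "x \<in> span (prim_gen ` rays \<Sigma>)" for x
  proof -
    obtain \<sigma> where \<sigma>: "\<sigma> \<in> \<Sigma>" "x \<in> \<sigma>" using assms unfolding complete_fan_def by blast
    have "x \<in> cg (prim_gen ` cone_rays \<Sigma> \<sigma>)" using cone_gen[OF fan \<sigma>(1)] \<sigma>(2) by blast
    also have "\<dots> \<subseteq> span (prim_gen ` cone_rays \<Sigma> \<sigma>)" by (rule cg_span)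
    also have "\<dots> \<subseteq> span (prim_gen ` rays \<Sigma>)" by (intro span_mono image_mono) (auto simp: cone_rays_def)
    finally show ?thesis .
  qed
  then show ?thesis by auto
qed

lemma ae_fan1: "amply_equivalent \<Sigma>1 \<Sigma>2 \<Psi> \<Longrightarrow> fan \<Sigma>1"
  unfolding amply_equivalent_def complete_fan_def by (elim conjE)
lemma ae_fan2: "amply_equivalent \<Sigma>1 \<Sigma>2 \<Psi> \<Longrightarrow> fan \<Sigma>2"
  unfolding amply_equivalent_def complete_fan_def by (elim conjE)
lemma ae_cfan1: "amply_equivalent \<Sigma>1 \<Sigma>2 \<Psi> \<Longrightarrow> complete_fan \<Sigma>1"
  unfolding amply_equivalent_def by (elim conjE)
lemma ae_cfan2: "amply_equivalent \<Sigma>1 \<Sigma>2 \<Psi> \<Longrightarrow> complete_fan \<Sigma>2"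
  unfolding amply_equivalent_def by (elim conjE)
lemma ae_bij: "amply_equivalent \<Sigma>1 \<Sigma>2 \<Psi> \<Longrightarrow> bij_betw \<Psi> (rays \<Sigma>1) (rays \<Sigma>2)"
  unfolding amply_equivalent_def by (elim conjE)
lemma ae_pc_all: "amply_equivalent \<Sigma>1 \<Sigma>2 \<Psi> \<Longrightarrow>
   (\<forall>C. C \<subseteq> rays \<Sigma>1 \<longrightarrow> (primitive_collection \<Sigma>1 C \<longleftrightarrow> primitive_collection \<Sigma>2 (\<Psi> ` C)))"
  unfolding amply_equivalent_def by (elim conjE)
lemma ae_pc: "amply_equivalent \<Sigma>1 \<Sigma>2 \<Psi> \<Longrightarrow> C \<subseteq> rays \<Sigma>1 \<Longrightarrow>
   primitive_collection \<Sigma>1 C \<longleftrightarrow> primitive_collection \<Sigma>2 (\<Psi> ` C)"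
  using ae_pc_all by blast
lemma ae_rel: "amply_equivalent \<Sigma>1 \<Sigma>2 \<Psi> \<Longrightarrow>
   (\<Sum>\<rho>\<in>rays \<Sigma>1. of_int (a \<rho>) *\<^sub>R prim_gen \<rho>) = 0 \<longleftrightarrow>
          (\<Sum>\<rho>\<in>rays \<Sigma>1. of_int (a \<rho>) *\<^sub>R prim_gen (\<Psi> \<rho>)) = 0"
  unfolding amply_equivalent_def by (elim conjE) blast

lemma prim_coll_exists:
  fixes \<Sigma> :: "(real^'n) set set"
  assumes fan: "fan \<Sigma>" and S: "S \<subseteq> rays \<Sigma>" and nc: "\<not> (\<exists>\<sigma>\<in>\<Sigma>. S \<subseteq> cone_rays \<Sigma> \<sigma>)"
  shows "\<exists>C\<subseteq>S. primitive_collection \<Sigma> C"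
proof -
  have fS: "finite S" using S finite_rays[OF fan] finite_subset by blast
  define M where "M = {C. C \<subseteq> S \<and> \<not> (\<exists>\<sigma>\<in>\<Sigma>. C \<subseteq> cone_rays \<Sigma> \<sigma>)}"
  have "M \<subseteq> Pow S" unfolding M_def by blast
  then have fM: "finite M" by (rule finite_subset) (use fS in simp)
  have "S \<in> M" unfolding M_def using nc by blast
  then obtain C where C: "C \<in> M" "\<not> (\<exists>x\<in>M. x < C)" using ex_min_if_finite[OF fM] by blast
  have "primitive_collection \<Sigma> C"
    unfolding primitive_collection_def
  proof (intro conjI allI impI)
    show "C \<subseteq> rays \<Sigma>" using C(1) S unfolding M_def by blast
    show "\<forall>\<sigma>\<in>\<Sigma>. \<not> C \<subseteq> cone_rays \<Sigma> \<sigma>" using C(1) unfolding M_def by blast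
    fix D assume "D \<subset> C"
    then have "D \<notin> M" using C(2) by blast
    moreover have "D \<subseteq> S" using \<open>D \<subset> C\<close> C(1) unfolding M_def by blast
    ultimately show "\<exists>\<sigma>\<in>\<Sigma>. D \<subseteq> cone_rays \<Sigma> \<sigma>" unfolding M_def by blast
  qed
  then show ?thesis using C(1) unfolding M_def by blast
qed

lemma pc_forward:
  fixes \<Sigma>1 \<Sigma>2 :: "(real^'n) set set"
  assumes ae: "amply_equivalent \<Sigma>1 \<Sigma>2 \<Psi>" and S: "S \<subseteq> rays \<Sigma>1" and \<sigma>: "\<sigma> \<in> \<Sigma>1" "S \<subseteq> cone_rays \<Sigma>1 \<sigma>"
  shows "\<exists>\<tau>\<in>\<Sigma>2. \<Psi> ` S \<subseteq> cone_rays \<Sigma>2 \<tau>"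
proof (rule ccontr)
  assume nc: "\<not> ?thesis"
  have fan2: "fan \<Sigma>2" and bij: "bij_betw \<Psi> (rays \<Sigma>1) (rays \<Sigma>2)"
    and pc: "\<And>C. C \<subseteq> rays \<Sigma>1 \<Longrightarrow> primitive_collection \<Sigma>1 C \<longleftrightarrow> primitive_collection \<Sigma>2 (\<Psi> ` C)"
    using ae_fan2[OF ae] ae_bij[OF ae] ae_pc[OF ae] by auto
  have "\<Psi> ` S \<subseteq> rays \<Sigma>2" using S bij bij_betw_imp_surj_on by blast
  then obtain D where D: "D \<subseteq> \<Psi> ` S" "primitive_collection \<Sigma>2 D" using prim_coll_exists[OF fan2 _ nc] by blast
  define C where "C = {\<rho>\<in>S. \<Psi> \<rho> \<in> D}"
  have "\<Psi> ` C = D" unfolding C_def using D(1) by blast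
  moreover have "C \<subseteq> rays \<Sigma>1" unfolding C_def using S by blast
  ultimately have "primitive_collection \<Sigma>1 C" using pc D(2) by blast
  moreover have "C \<subseteq> cone_rays \<Sigma>1 \<sigma>" unfolding C_def using \<sigma>(2) by blast
  ultimately show False using \<sigma>(1) unfolding primitive_collection_def by blast
qed

lemma pc_backward:
  fixes \<Sigma>1 \<Sigma>2 :: "(real^'n) set set"
  assumes ae: "amply_equivalent \<Sigma>1 \<Sigma>2 \<Psi>" and S: "S \<subseteq> rays \<Sigma>1" and \<tau>: "\<tau> \<in> \<Sigma>2" "\<Psi> ` S \<subseteq> cone_rays \<Sigma>2 \<tau>"
  shows "\<exists>\<sigma>\<in>\<Sigma>1. S \<subseteq> cone_rays \<Sigma>1 \<sigma>"
proof (rule ccontr)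
  assume nc: "\<not> ?thesis"
  have fan1: "fan \<Sigma>1"
    and pc: "\<And>C. C \<subseteq> rays \<Sigma>1 \<Longrightarrow> primitive_collection \<Sigma>1 C \<longleftrightarrow> primitive_collection \<Sigma>2 (\<Psi> ` C)"
    using ae_fan1[OF ae] ae_pc[OF ae] by auto
  obtain C where C: "C \<subseteq> S" "primitive_collection \<Sigma>1 C" using prim_coll_exists[OF fan1 S nc] by blast
  then have "primitive_collection \<Sigma>2 (\<Psi> ` C)" using pc S by blast
  moreover have "\<Psi> ` C \<subseteq> cone_rays \<Sigma>2 \<tau>" using C(1) \<tau>(2) by blast
  ultimately show False using \<tau>(1) unfolding primitive_collection_def by blast
qed

lemma fan_cone_sum:
  fixes \<Sigma> :: "(real^'n) set set"
  assumes "fan \<Sigma>" "\<tau> \<in> \<Sigma>" "finite I" "\<And>i. i \<in> I \<Longrightarrow> x i \<in> \<tau>" "\<And>i. i \<in> I \<Longrightarrow> d i \<ge> 0"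
  shows "(\<Sum>i\<in>I. d i *\<^sub>R x i) \<in> \<tau>"
proof -
  obtain S where S: "\<tau> = cg S" using fan_cone_cg[OF assms(1,2)] by blast
  show ?thesis using assms(3-5) unfolding S by (rule cg_sum)
qed

lemma contain:
  fixes \<Sigma>a \<Sigma>b :: "(real^'n) set set" and L :: "real^'n \<Rightarrow> real^'n"
  assumes fa: "fan \<Sigma>a" and fb: "fan \<Sigma>b" and lin: "linear L"
    and Lu: "\<And>\<rho>. \<rho> \<in> rays \<Sigma>a \<Longrightarrow> L (prim_gen \<rho>) = prim_gen (\<Phi> \<rho>)"
    and hyp: "\<tau> \<in> \<Sigma>b" "\<Phi> ` cone_rays \<Sigma>a \<sigma> \<subseteq> cone_rays \<Sigma>b \<tau>"
    and \<sigma>: "\<sigma> \<in> \<Sigma>a"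
  shows "L ` \<sigma> \<subseteq> \<tau>"
proof
  fix y assume "y \<in> L ` \<sigma>"
  then obtain x where x: "x \<in> \<sigma>" "y = L x" by blast
  define U where "U = prim_gen ` cone_rays \<Sigma>a \<sigma>"
  have fU: "finite U" unfolding U_def using finite_cone_rays[OF fa] by blast
  have "x \<in> cg U" using cone_gen[OF fa \<sigma>] x(1) unfolding U_def by blast
  then obtain c where c: "\<And>v. v \<in> U \<Longrightarrow> c v \<ge> 0" "x = (\<Sum>v\<in>U. c v *\<^sub>R v)" using cgE by blast
  have "y = (\<Sum>v\<in>U. c v *\<^sub>R L v)" unfolding x(2) c(2) using lin
    by (simp add: real_vector.linear_sum real_vector.linear_scale o_def)
  also have "\<dots> \<in> \<tau>"
  proof (rule fan_cone_sum[OF fb hyp(1) fU])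
    fix v assume "v \<in> U"
    then obtain \<rho> where \<rho>: "\<rho> \<in> cone_rays \<Sigma>a \<sigma>" "v = prim_gen \<rho>" unfolding U_def by blast
    have r: "\<rho> \<in> rays \<Sigma>a" using \<rho>(1) unfolding cone_rays_def by blast
    have p: "\<Phi> \<rho> \<in> cone_rays \<Sigma>b \<tau>" using hyp(2) \<rho>(1) by blast
    then have "\<Phi> \<rho> \<in> rays \<Sigma>b" "\<Phi> \<rho> \<subseteq> \<tau>" unfolding cone_rays_def using face_of_imp_subset by blast+
    then have "prim_gen (\<Phi> \<rho>) \<in> \<tau>" using prim_gen_props(1)[OF fb] by blast
    then show "L v \<in> \<tau>" using Lu[OF r] \<rho>(2) by simp
    show "c v \<ge> 0" using c(1) \<open>v \<in> U\<close> .
  qed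
  finally show "y \<in> \<tau>" .
qed

lemma fan_nonempty:
  fixes \<Sigma> :: "(real^'n) set set"
  assumes "fan \<Sigma>" "\<sigma> \<in> \<Sigma>" shows "\<sigma> \<noteq> {}"
proof -
  obtain S where S: "\<sigma> = cg S" using fan_cone_cg[OF assms] by blast
  show ?thesis unfolding S using cg_zero by blast
qed

lemma main_dir:
  fixes \<Sigma>a \<Sigma>b :: "(real^'n) set set" and L L' :: "real^'n \<Rightarrow> real^'n"
  assumes fa: "fan \<Sigma>a" and fb: "fan \<Sigma>b" and lin: "linear L"
    and inv1: "\<And>x. L' (L x) = x" and inv2: "\<And>x. L (L' x) = x"
    and cA: "\<And>\<sigma>. \<sigma> \<in> \<Sigma>a \<Longrightarrow> \<exists>\<tau>\<in>\<Sigma>b. L ` \<sigma> \<subseteq> \<tau>"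
    and cB: "\<And>\<tau>. \<tau> \<in> \<Sigma>b \<Longrightarrow> \<exists>\<sigma>\<in>\<Sigma>a. L' ` \<tau> \<subseteq> \<sigma>"
    and \<sigma>: "\<sigma> \<in> \<Sigma>a"
  shows "L ` \<sigma> \<in> \<Sigma>b"
proof -
  obtain \<tau> where \<tau>: "\<tau> \<in> \<Sigma>b" "L ` \<sigma> \<subseteq> \<tau>" using cA[OF \<sigma>] by blast
  obtain \<sigma>' where \<sigma>': "\<sigma>' \<in> \<Sigma>a" "L' ` \<tau> \<subseteq> \<sigma>'" using cB[OF \<tau>(1)] by blast
  have sub: "\<sigma> \<subseteq> \<sigma>'"
  proof
    fix x assume "x \<in> \<sigma>"
    then have "L x \<in> \<tau>" using \<tau>(2) by blast
    then have "L' (L x) \<in> \<sigma>'" using \<sigma>'(2) by blast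
    then show "x \<in> \<sigma>'" using inv1 by simp
  qed
  have "(\<sigma> \<inter> \<sigma>') face_of \<sigma>'" using fa \<sigma> \<sigma>'(1) unfolding fan_def by blast
  then have f1: "\<sigma> face_of \<sigma>'" using sub by (simp add: Int_absorb2)
  have injL: "inj L"
  proof (rule injI)
    fix x y assume "L x = L y"
    then have "L' (L x) = L' (L y)" by simp
    then show "x = y" using inv1 by simp
  qed
  have f2: "L ` \<sigma> face_of L ` \<sigma>'" using face_of_linear_image[OF lin injL] f1 by blast
  have "\<tau> \<subseteq> L ` \<sigma>'"
  proof
    fix y assume "y \<in> \<tau>"
    then have "L' y \<in> \<sigma>'" using \<sigma>'(2) by blast
    then show "y \<in> L ` \<sigma>'" by (rule image_eqI[where f=L and x="L' y", OF sym[OF inv2[of y]]])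
  qed
  then have "L ` \<sigma> face_of \<tau>" using face_of_subset[OF f2 \<tau>(2)] by blast
  moreover have "L ` \<sigma> \<noteq> {}" using fan_nonempty[OF fa \<sigma>] by blast
  ultimately show ?thesis using fb \<tau>(1) unfolding fan_def by blast
qed

definition ratv :: "real^'n \<Rightarrow> bool" where "ratv x \<longleftrightarrow> (\<forall>i. x $ i \<in> \<rat>)"
definition ratm :: "real^'n^'m \<Rightarrow> bool" where "ratm M \<longleftrightarrow> (\<forall>i j. M $ i $ j \<in> \<rat>)"
definition outer :: "real^'m \<Rightarrow> real^'n \<Rightarrow> real^'n^'m" where "outer x y = (\<chi> i j. x $ i * y $ j)"

lemma lattice_ratv: "x \<in> lattice \<Longrightarrow> ratv x"
  unfolding lattice_def ratv_def using Ints_subset_Rats by blast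

lemma ratm_mult: "ratm M \<Longrightarrow> ratm N \<Longrightarrow> ratm (M ** N)"
  unfolding ratm_def matrix_matrix_mult_def by (auto intro!: Rats_sum Rats_mult)

lemma ratv_mult: "ratm M \<Longrightarrow> ratv x \<Longrightarrow> ratv (M *v x)"
  unfolding ratm_def ratv_def matrix_vector_mult_def by (auto intro!: Rats_sum Rats_mult)

lemma ratv_inner: "ratv x \<Longrightarrow> ratv y \<Longrightarrow> x \<bullet> y \<in> \<rat>"
  unfolding ratv_def inner_vec_def by (auto intro!: Rats_sum Rats_mult)

lemma ratm_outer: "ratv x \<Longrightarrow> ratv y \<Longrightarrow> ratm (outer x y)"
  unfolding ratv_def ratm_def outer_def by auto

lemma ratm_sum: "(\<And>r. r \<in> R \<Longrightarrow> ratm (M r)) \<Longrightarrow> ratm (sum M R)"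
  unfolding ratm_def by (auto simp: sum_component intro!: Rats_sum)

lemma det_rat: "ratm (M :: real^'n^'n) \<Longrightarrow> det M \<in> \<rat>"
  unfolding ratm_def det_def by (auto intro!: Rats_sum Rats_mult Rats_prod)

lemma outer_mult: "outer x y *v z = (y \<bullet> z) *\<^sub>R x"
  unfolding outer_def matrix_vector_mult_def inner_vec_def
  by (simp add: vec_eq_iff sum_distrib_left sum_distrib_right mult.commute mult.left_commute)

lemma sum_mat_mult: "finite R \<Longrightarrow> (sum M R) *v z = (\<Sum>r\<in>R. M r *v z)"
  by (induction R rule: finite_induct) (auto simp: matrix_vector_mult_add_rdistrib matrix_vector_mult_0)

lemma common_denom:
  "finite F \<Longrightarrow> (\<And>x. x \<in> F \<Longrightarrow> f x \<in> \<rat>) \<Longrightarrow> \<exists>D::int. D > 0 \<and> (\<forall>x\<in>F. of_int D * f x \<in> \<int>)"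
proof (induction F rule: finite_induct)
  case empty then show ?case by (intro exI[of _ 1]) auto
next
  case (insert a F)
  then obtain D :: int where D: "D > 0" "\<forall>x\<in>F. of_int D * f x \<in> \<int>" by auto
  have "f a \<in> \<rat>" using insert by auto
  then obtain p q :: int where pq: "q > 0" "f a = of_int p / of_int q" by (rule Rats_cases') auto
  have e: "of_int (D * q) * f a = of_int (D * p)" using pq by simp
  have ha: "of_int (D * q) * f a \<in> \<int>" unfolding e by (rule Ints_of_int)
  have hF: "of_int (D * q) * f x \<in> \<int>" if "x \<in> F" for x
  proof -
    have eq: "of_int (D * q) * f x = of_int q * (of_int D * f x)" by simp
    have "of_int D * f x \<in> \<int>" using D(2) that by blast
    then have "of_int q * (of_int D * f x) \<in> \<int>" by (rule Ints_mult[OF Ints_of_int])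
    then show ?thesis by (subst eq)
  qed
  show ?case
  proof (intro exI[of _ "D * q"] conjI ballI)
    show "D * q > 0" using D(1) pq(1) by simp
    fix x assume "x \<in> insert a F"
    then show "of_int (D * q) * f x \<in> \<int>" using ha hF by blast
  qed
qed

lemma rat_rel:
  fixes u w :: "'a \<Rightarrow> real^'n"
  assumes R: "finite R"
    and rel: "\<And>a :: 'a \<Rightarrow> int. (\<Sum>r\<in>R. of_int (a r) *\<^sub>R u r) = 0 \<Longrightarrow> (\<Sum>r\<in>R. of_int (a r) *\<^sub>R w r) = 0"
    and hq: "\<And>r. r \<in> R \<Longrightarrow> q r \<in> \<rat>" and z: "(\<Sum>r\<in>R. q r *\<^sub>R u r) = 0"
  shows "(\<Sum>r\<in>R. q r *\<^sub>R w r) = 0"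
proof -
  obtain D :: int where D: "D > 0" "\<forall>r\<in>R. of_int D * q r \<in> \<int>" using common_denom[OF R, of q] hq by blast
  define a where "a r = \<lfloor>of_int D * q r\<rfloor>" for r
  have a: "of_int (a r) = of_int D * q r" if "r \<in> R" for r
  proof -
    have "of_int D * q r \<in> \<int>" using D(2) that by blast
    then obtain k where "of_int D * q r = of_int k" by (rule Ints_cases)
    then show ?thesis unfolding a_def by simp
  qed
  have "(\<Sum>r\<in>R. of_int (a r) *\<^sub>R u r) = of_int D *\<^sub>R (\<Sum>r\<in>R. q r *\<^sub>R u r)"
    by (simp add: scaleR_sum_right a)
  then have "(\<Sum>r\<in>R. of_int (a r) *\<^sub>R u r) = 0" using z by simp
  then have "(\<Sum>r\<in>R. of_int (a r) *\<^sub>R w r) = 0" by (rule rel)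
  moreover have "(\<Sum>r\<in>R. of_int (a r) *\<^sub>R w r) = of_int D *\<^sub>R (\<Sum>r\<in>R. q r *\<^sub>R w r)"
    by (simp add: scaleR_sum_right a)
  ultimately show ?thesis using D(1) by simp
qed

lemma exists_rat_map:
  fixes u w :: "'a \<Rightarrow> real^'n"
  assumes R: "finite R" and sp: "span (u ` R) = UNIV"
    and ul: "\<And>r. r \<in> R \<Longrightarrow> ratv (u r)" and wl: "\<And>r. r \<in> R \<Longrightarrow> ratv (w r)"
    and rel: "\<And>q. (\<And>r. r \<in> R \<Longrightarrow> q r \<in> \<rat>) \<Longrightarrow> (\<Sum>r\<in>R. q r *\<^sub>R u r) = 0 \<Longrightarrow> (\<Sum>r\<in>R. q r *\<^sub>R w r) = 0"
  shows "\<exists>A::real^'n^'n. ratm A \<and> (\<forall>r\<in>R. A *v u r = w r)"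
proof -
  define P where "P = (\<Sum>r\<in>R. outer (u r) (u r))"
  define Q where "Q = (\<Sum>r\<in>R. outer (w r) (u r))"
  have Pv: "P *v z = (\<Sum>r\<in>R. (u r \<bullet> z) *\<^sub>R u r)" for z
    unfolding P_def by (simp add: sum_mat_mult[OF R] outer_mult)
  have Qv: "Q *v z = (\<Sum>r\<in>R. (u r \<bullet> z) *\<^sub>R w r)" for z
    unfolding Q_def by (simp add: sum_mat_mult[OF R] outer_mult)
  have ker: "z = 0" if z: "P *v z = 0" for z
  proof -
    have "z \<bullet> (P *v z) = (\<Sum>r\<in>R. (u r \<bullet> z) * (u r \<bullet> z))"
      unfolding Pv by (simp add: inner_sum_right inner_commute)
    then have "(\<Sum>r\<in>R. (u r \<bullet> z) * (u r \<bullet> z)) = 0" using z by simp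
    then have o: "\<forall>r\<in>R. (u r \<bullet> z) * (u r \<bullet> z) = 0"
      using sum_nonneg_eq_0_iff[OF R, of "\<lambda>r. (u r \<bullet> z) * (u r \<bullet> z)"] by simp
    have o2: "v \<bullet> z = 0" if "v \<in> u ` R" for v using o that by auto
    have "z \<in> span (u ` R)" using sp by simp
    then obtain c where c: "z = (\<Sum>v\<in>u ` R. c v *\<^sub>R v)" using span_finite[of "u ` R"] R by auto
    have "z \<bullet> z = (\<Sum>v\<in>u ` R. c v * (v \<bullet> z))"
      by (subst (1) c) (simp add: inner_sum_left)
    also have "\<dots> = 0" using o2 by simp
    finally show "z = 0" by simp
  qed
  have "\<exists>B. B ** P = mat 1" using ker by (simp add: matrix_left_invertible_ker)
  then obtain B where "B ** P = mat 1" by blast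
  then have "P ** B = mat 1" by (simp add: matrix_left_right_inverse)
  then have "invertible P" unfolding invertible_def using \<open>B ** P = mat 1\<close> by blast
  then have detnz: "det P \<noteq> 0" by (simp add: invertible_det_nz)
  define z where "z j = (\<chi> k. det (\<chi> i l. if l = k then axis j 1 $ i else P $ i $ l) / det P)" for j
  have Pz: "P *v z j = axis j 1" for j
    using cramer[OF detnz, of "z j" "axis j 1"] unfolding z_def by simp
  define G where "G = (\<chi> k j. z j $ k)"
  have ratP: "ratm P" unfolding P_def using ul by (intro ratm_sum ratm_outer) auto
  have ratQ: "ratm Q" unfolding Q_def using ul wl by (intro ratm_sum ratm_outer) auto
  have ratG: "ratm G"
    unfolding ratm_def G_def z_def
  proof (intro allI)
    fix k j
    have "ratm (\<chi> i l. if l = k then axis j 1 $ i else P $ i $ l)"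
      using ratP unfolding ratm_def by (auto simp: axis_def)
    then show "(\<chi> k j. (\<chi> k. det (\<chi> i l. if l = k then axis j 1 $ i else P $ i $ l) / det P) $ k) $ k $ j \<in> \<rat>"
      using det_rat[OF ratP] by (simp add: det_rat)
  qed
  have PG: "P ** G = mat 1"
  proof -
    have "(P ** G) $ i $ j = mat 1 $ i $ j" for i j
    proof -
      have "(P ** G) $ i $ j = (P *v z j) $ i"
        unfolding G_def matrix_matrix_mult_def matrix_vector_mult_def by simp
      also have "\<dots> = mat 1 $ i $ j" unfolding Pz by (simp add: axis_def mat_def)
      finally show ?thesis .
    qed
    then show ?thesis by (simp add: vec_eq_iff)
  qed
  define A where "A = Q ** G"
  have ratA: "ratm A" unfolding A_def by (rule ratm_mult[OF ratQ ratG])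
  have "A *v u s = w s" if s: "s \<in> R" for s
  proof -
    define y where "y = G *v u s"
    have raty: "ratv y" unfolding y_def by (rule ratv_mult[OF ratG ul[OF s]])
    have Py: "P *v y = u s" unfolding y_def by (simp add: matrix_vector_mul_assoc PG)
    define c where "c r = u r \<bullet> y" for r
    have cq: "c r \<in> \<rat>" if "r \<in> R" for r unfolding c_def by (rule ratv_inner[OF ul[OF that] raty])
    have us: "u s = (\<Sum>r\<in>R. c r *\<^sub>R u r)" using Py unfolding Pv c_def by simp
    have delta: "(\<Sum>r\<in>R. (if r = s then 1 else 0) *\<^sub>R v r) = v s" for v :: "'a \<Rightarrow> real^'n"
    proof -
      have "(\<Sum>r\<in>R. (if r = s then 1 else 0) *\<^sub>R v r) = (\<Sum>r\<in>R. if r = s then v r else 0)"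
        by (intro sum.cong) auto
      also have "\<dots> = v s" using R s by (simp add: sum.delta)
      finally show ?thesis .
    qed
    define q where "q r = c r - (if r = s then 1 else 0)" for r
    have qq: "q r \<in> \<rat>" if "r \<in> R" for r unfolding q_def using cq[OF that] by auto
    have "(\<Sum>r\<in>R. q r *\<^sub>R u r) = (\<Sum>r\<in>R. c r *\<^sub>R u r) - (\<Sum>r\<in>R. (if r = s then 1 else 0) *\<^sub>R u r)"
      unfolding q_def by (simp add: scaleR_diff_left sum_subtractf)
    also have "\<dots> = 0" using us delta[of u] by simp
    finally have "(\<Sum>r\<in>R. q r *\<^sub>R w r) = 0" using rel[of q] qq by blast
    moreover have "(\<Sum>r\<in>R. q r *\<^sub>R w r) = (\<Sum>r\<in>R. c r *\<^sub>R w r) - w s"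
      unfolding q_def by (simp add: scaleR_diff_left sum_subtractf delta[of w])
    ultimately have ws: "w s = (\<Sum>r\<in>R. c r *\<^sub>R w r)" by simp
    have "A *v u s = Q *v y" unfolding A_def y_def by (simp add: matrix_vector_mul_assoc)
    also have "\<dots> = w s" unfolding Qv ws c_def ..
    finally show ?thesis .
  qed
  then show ?thesis using ratA by blast
qed

theorem proposition5p25:
  fixes \<Sigma>1 \<Sigma>2 :: "(real^'n) set set"
    and \<Psi> :: "(real^'n) set \<Rightarrow> (real^'n) set"
  assumes "complete_fan \<Sigma>1" and "complete_fan \<Sigma>2"
    and "amply_equivalent \<Sigma>1 \<Sigma>2 \<Psi>"
  shows "\<exists>A :: real^'n^'n.
           (\<forall>i j. A $ i $ j \<in> \<rat>) \<and> invertible A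
         \<and> (\<forall>\<rho>\<in>rays \<Sigma>1. A *v prim_gen \<rho> = prim_gen (\<Psi> \<rho>))
         \<and> (\<forall>\<sigma>. sc_rat_cone \<sigma> \<longrightarrow> (\<sigma> \<in> \<Sigma>1 \<longleftrightarrow> (\<lambda>x. A *v x) ` \<sigma> \<in> \<Sigma>2))
         \<and> (\<forall>b :: (real^'n) set \<Rightarrow> real. (\<forall>\<rho>. b \<rho> \<in> \<rat>) \<longrightarrow>
              A *v (\<Sum>\<rho>\<in>rays \<Sigma>1. b \<rho> *\<^sub>R prim_gen \<rho>) = (\<Sum>\<rho>\<in>rays \<Sigma>1. b \<rho> *\<^sub>R prim_gen (\<Psi> \<rho>))
            \<and> ((\<Sum>\<rho>\<in>rays \<Sigma>1. b \<rho> *\<^sub>R prim_gen \<rho>) = 0 \<longleftrightarrow>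
               (\<Sum>\<rho>\<in>rays \<Sigma>1. b \<rho> *\<^sub>R prim_gen (\<Psi> \<rho>)) = 0))"
proof -
  note ae = assms(3)
  have fan1: "fan \<Sigma>1" using ae_fan1[OF ae] .
  have fan2: "fan \<Sigma>2" using ae_fan2[OF ae] .
  have bij: "bij_betw \<Psi> (rays \<Sigma>1) (rays \<Sigma>2)" using ae_bij[OF ae] .
  define R1 where "R1 = rays \<Sigma>1"
  have fR1: "finite R1" unfolding R1_def by (rule finite_rays[OF fan1])
  have sp1: "span (prim_gen ` R1) = UNIV" unfolding R1_def by (rule span_prim_gens[OF assms(1)])
  have sp2: "span (prim_gen ` rays \<Sigma>2) = UNIV" by (rule span_prim_gens[OF assms(2)])
  have PsiR: "\<Psi> r \<in> rays \<Sigma>2" if "r \<in> R1" for r using bij_betw_apply[OF bij] that unfolding R1_def .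
  have ul: "ratv (prim_gen r)" if "r \<in> R1" for r
    using prim_gen_props(2)[OF fan1] that lattice_ratv unfolding R1_def by blast
  have wl: "ratv (prim_gen (\<Psi> r))" if "r \<in> R1" for r
    using prim_gen_props(2)[OF fan2 PsiR[OF that]] lattice_ratv by blast
  have rel: "(\<Sum>r\<in>R1. q r *\<^sub>R prim_gen (\<Psi> r)) = 0"
    if "\<And>r. r \<in> R1 \<Longrightarrow> q r \<in> \<rat>" "(\<Sum>r\<in>R1. q r *\<^sub>R prim_gen r) = 0" for q
  proof (rule rat_rel[OF fR1 _ that])
    fix a :: "(real^'n) set \<Rightarrow> int"
    assume "(\<Sum>r\<in>R1. of_int (a r) *\<^sub>R prim_gen r) = 0"
    then show "(\<Sum>r\<in>R1. of_int (a r) *\<^sub>R prim_gen (\<Psi> r)) = 0" using ae_rel[OF ae, of a] unfolding R1_def by blast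
  qed
  obtain A :: "real^'n^'n" where A: "ratm A" "\<And>r. r \<in> R1 \<Longrightarrow> A *v prim_gen r = prim_gen (\<Psi> r)"
    using exists_rat_map[OF fR1 sp1 ul wl rel] by blast
  have lin: "linear (\<lambda>x. A *v x)" by (rule matrix_vector_mul_linear)
  have "prim_gen ` rays \<Sigma>2 \<subseteq> range (\<lambda>x. A *v x)"
  proof
    fix y assume "y \<in> prim_gen ` rays \<Sigma>2"
    then obtain t where t: "t \<in> rays \<Sigma>2" "y = prim_gen t" by blast
    then have "t \<in> \<Psi> ` R1" using bij_betw_imp_surj_on[OF bij] unfolding R1_def by blast
    then obtain r where "r \<in> R1" "t = \<Psi> r" by blast
    then show "y \<in> range (\<lambda>x. A *v x)" using A(2) t(2) by (metis rangeI)
  qed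
  then have "span (prim_gen ` rays \<Sigma>2) \<subseteq> span (range (\<lambda>x. A *v x))" by (rule span_mono)
  also have "\<dots> = range (\<lambda>x. A *v x)" using real_vector.linear_span_image[OF lin, of UNIV] by simp
  finally have surj: "surj (\<lambda>x. A *v x)" using sp2 by blast
  then obtain B where AB: "A ** B = mat 1" using matrix_right_invertible_surjective by blast
  then have BA: "B ** A = mat 1" by (simp add: matrix_left_right_inverse)
  have invA: "invertible A" unfolding invertible_def using AB BA by blast
  have inv1: "B *v (A *v x) = x" for x by (simp add: matrix_vector_mul_assoc BA)
  have inv2: "A *v (B *v x) = x" for x by (simp add: matrix_vector_mul_assoc AB)
  have linB: "linear (\<lambda>x. B *v x)" by (rule matrix_vector_mul_linear)
  define \<Phi> where "\<Phi> = inv_into R1 \<Psi>"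
  have surjP: "\<Psi> ` R1 = rays \<Sigma>2" using bij_betw_imp_surj_on[OF bij] unfolding R1_def .
  have PhiR: "\<Phi> t \<in> R1" and PsiPhi: "\<Psi> (\<Phi> t) = t" if "t \<in> rays \<Sigma>2" for t
    using that surjP inv_into_into[of t \<Psi> R1] f_inv_into_f[of t \<Psi> R1] unfolding \<Phi>_def by auto
  have Bu: "B *v prim_gen t = prim_gen (\<Phi> t)" if "t \<in> rays \<Sigma>2" for t
  proof -
    have "A *v prim_gen (\<Phi> t) = prim_gen t" using A(2)[OF PhiR[OF that]] PsiPhi[OF that] by simp
    then have "B *v (A *v prim_gen (\<Phi> t)) = B *v prim_gen t" by simp
    then show ?thesis using inv1 by simp
  qed
  have cA: "\<exists>\<tau>\<in>\<Sigma>2. (\<lambda>x. A *v x) ` \<sigma> \<subseteq> \<tau>" if \<sigma>: "\<sigma> \<in> \<Sigma>1" for \<sigma>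
  proof -
    have "cone_rays \<Sigma>1 \<sigma> \<subseteq> rays \<Sigma>1" unfolding cone_rays_def by blast
    then obtain \<tau> where \<tau>: "\<tau> \<in> \<Sigma>2" "\<Psi> ` cone_rays \<Sigma>1 \<sigma> \<subseteq> cone_rays \<Sigma>2 \<tau>"
      using pc_forward[OF ae _ \<sigma>] by blast
    have "(\<lambda>x. A *v x) ` \<sigma> \<subseteq> \<tau>"
      using contain[OF fan1 fan2 lin _ \<tau> \<sigma>] A(2) unfolding R1_def by blast
    then show ?thesis using \<tau>(1) by blast
  qed
  have cB: "\<exists>\<sigma>\<in>\<Sigma>1. (\<lambda>x. B *v x) ` \<tau> \<subseteq> \<sigma>" if \<tau>: "\<tau> \<in> \<Sigma>2" for \<tau>
  proof -
    define S where "S = \<Phi> ` cone_rays \<Sigma>2 \<tau>"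
    have CR: "cone_rays \<Sigma>2 \<tau> \<subseteq> rays \<Sigma>2" unfolding cone_rays_def by blast
    have S1: "S \<subseteq> rays \<Sigma>1" unfolding S_def using PhiR CR unfolding R1_def by blast
    have "\<Psi> ` S = cone_rays \<Sigma>2 \<tau>" unfolding S_def image_image using PsiPhi CR
      by (simp add: subset_iff cong: image_cong)
    then obtain \<sigma> where \<sigma>: "\<sigma> \<in> \<Sigma>1" "S \<subseteq> cone_rays \<Sigma>1 \<sigma>"
      using pc_backward[OF ae S1 \<tau>] by blast
    have "(\<lambda>x. B *v x) ` \<tau> \<subseteq> \<sigma>"
      using contain[OF fan2 fan1 linB _ \<sigma>(1) _ \<tau>, of \<Phi>] Bu \<sigma>(2) unfolding S_def by blast
    then show ?thesis using \<sigma>(1) by blast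
  qed
  have fwd: "(\<lambda>x. A *v x) ` \<sigma> \<in> \<Sigma>2" if "\<sigma> \<in> \<Sigma>1" for \<sigma>
    using main_dir[OF fan1 fan2 lin, of "\<lambda>x. B *v x"] inv1 inv2 cA cB that by blast
  have bwd: "(\<lambda>x. B *v x) ` \<tau> \<in> \<Sigma>1" if "\<tau> \<in> \<Sigma>2" for \<tau>
    using main_dir[OF fan2 fan1 linB, of "\<lambda>x. A *v x"] inv1 inv2 cA cB that by blast
  have cones: "\<sigma> \<in> \<Sigma>1 \<longleftrightarrow> (\<lambda>x. A *v x) ` \<sigma> \<in> \<Sigma>2" for \<sigma>
  proof
    assume "(\<lambda>x. A *v x) ` \<sigma> \<in> \<Sigma>2"
    then have "(\<lambda>x. B *v x) ` ((\<lambda>x. A *v x) ` \<sigma>) \<in> \<Sigma>1" by (rule bwd)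
    moreover have "(\<lambda>x. B *v x) ` ((\<lambda>x. A *v x) ` \<sigma>) = \<sigma>" unfolding image_image inv1 by simp
    ultimately show "\<sigma> \<in> \<Sigma>1" by simp
  qed (rule fwd)
  have sums: "A *v (\<Sum>\<rho>\<in>rays \<Sigma>1. b \<rho> *\<^sub>R prim_gen \<rho>) = (\<Sum>\<rho>\<in>rays \<Sigma>1. b \<rho> *\<^sub>R prim_gen (\<Psi> \<rho>))"
    for b :: "(real^'n) set \<Rightarrow> real"
  proof -
    have "A *v (\<Sum>\<rho>\<in>rays \<Sigma>1. b \<rho> *\<^sub>R prim_gen \<rho>) = (\<Sum>\<rho>\<in>rays \<Sigma>1. b \<rho> *\<^sub>R (A *v prim_gen \<rho>))"
      using lin by (simp add: real_vector.linear_sum real_vector.linear_scale o_def)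
    also have "\<dots> = (\<Sum>\<rho>\<in>rays \<Sigma>1. b \<rho> *\<^sub>R prim_gen (\<Psi> \<rho>))"
      using A(2) unfolding R1_def by (intro sum.cong) auto
    finally show ?thesis .
  qed
  have zeros: "(\<Sum>\<rho>\<in>rays \<Sigma>1. b \<rho> *\<^sub>R prim_gen \<rho>) = 0 \<longleftrightarrow> (\<Sum>\<rho>\<in>rays \<Sigma>1. b \<rho> *\<^sub>R prim_gen (\<Psi> \<rho>)) = 0"
    for b :: "(real^'n) set \<Rightarrow> real"
  proof
    assume "(\<Sum>\<rho>\<in>rays \<Sigma>1. b \<rho> *\<^sub>R prim_gen \<rho>) = 0"
    then show "(\<Sum>\<rho>\<in>rays \<Sigma>1. b \<rho> *\<^sub>R prim_gen (\<Psi> \<rho>)) = 0" using sums[of b] by simp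
  next
    assume "(\<Sum>\<rho>\<in>rays \<Sigma>1. b \<rho> *\<^sub>R prim_gen (\<Psi> \<rho>)) = 0"
    then have "B *v (A *v (\<Sum>\<rho>\<in>rays \<Sigma>1. b \<rho> *\<^sub>R prim_gen \<rho>)) = 0" using sums[of b] by simp
    then show "(\<Sum>\<rho>\<in>rays \<Sigma>1. b \<rho> *\<^sub>R prim_gen \<rho>) = 0" using inv1 by simp
  qed
  show ?thesis
    using A(1) invA A(2) cones sums zeros unfolding ratm_def R1_def by blast
qed

end
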